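(* Let $A$ be a square real matrix that is weakly diagonally dominant, is a Z-matrix, and has nonnegative diagonal entries. Then the following are equivalent: (i) $A$ is a nonsingular M-matrix; (ii) $A$ is nonsingular; (iii) $A$ is weakly chained diagonally dominant.
   Context: For a complex matrix $A=(a_{ij})$: row $i$ is strictly diagonally dominant (s.d.d.) if $|a_{ii}|>\sum_{j\ne i}|a_{ij}|$ and weakly diagonally dominant (w.d.d.) if $|a_{ii}|\ge\sum_{j\ne i}|a_{ij}|$; the matrix is s.d.d. (resp. w.d.d.) if all its rows are. The directed adjacency graph of an $(M+1)\times(M+1)$ matrix has vertices $\{0,\dots,M\}$ and an edge $i\to j$ iff $a_{ij}\ne0$. A square matrix is weakly chained diagonally dominant (w.c.d.d.) if it is w.d.d. and for every row $i_1$ that is not s.d.d. there is a walk $i_1\to i_2\to\cdots\to i_k$ in its adjacency graph with $i_k$ an s.d.d. row. A Z-matrix is a real matrix with nonpositive off-diagonal entries. A nonsingular M-matrix is a Z-matrix that is monotone, i.e. nonsingular with entrywise nonnegative inverse. *)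

theory Defs
  imports "HOL-Analysis.Analysis"
begin

definition row_sdd :: "('a::real_normed_vector) ^ 'n ^ 'n \<Rightarrow> 'n \<Rightarrow> bool" where
  "row_sdd A i \<longleftrightarrow> norm (A $ i $ i) > (\<Sum>j\<in>UNIV - {i}. norm (A $ i $ j))"

definition row_wdd :: "('a::real_normed_vector) ^ 'n ^ 'n \<Rightarrow> 'n \<Rightarrow> bool" where
  "row_wdd A i \<longleftrightarrow> norm (A $ i $ i) \<ge> (\<Sum>j\<in>UNIV - {i}. norm (A $ i $ j))"

definition wdd :: "('a::real_normed_vector) ^ 'n ^ 'n \<Rightarrow> bool" where
  "wdd A \<longleftrightarrow> (\<forall>i. row_wdd A i)"

definition adj_walk :: "('a::zero) ^ 'n ^ 'n \<Rightarrow> 'n list \<Rightarrow> bool" where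
  "adj_walk A ws \<longleftrightarrow> ws \<noteq> [] \<and> (\<forall>t. Suc t < length ws \<longrightarrow> A $ (ws ! t) $ (ws ! Suc t) \<noteq> 0)"

definition wcdd :: "('a::real_normed_vector) ^ 'n ^ 'n \<Rightarrow> bool" where
  "wcdd A \<longleftrightarrow> wdd A \<and>
     (\<forall>i. \<not> row_sdd A i \<longrightarrow>
        (\<exists>ws. adj_walk A ws \<and> hd ws = i \<and> row_sdd A (last ws)))"

definition Z_matrix :: "real ^ 'n ^ 'n \<Rightarrow> bool" where
  "Z_matrix A \<longleftrightarrow> (\<forall>i j. i \<noteq> j \<longrightarrow> A $ i $ j \<le> 0)"

definition monotone_matrix :: "real ^ 'n ^ 'n \<Rightarrow> bool" where
  "monotone_matrix A \<longleftrightarrow> invertible A \<and> (\<forall>i j. matrix_inv A $ i $ j \<ge> 0)"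

definition nonsingular_M_matrix :: "real ^ 'n ^ 'n \<Rightarrow> bool" where
  "nonsingular_M_matrix A \<longleftrightarrow> Z_matrix A \<and> monotone_matrix A"

end

theory Submission
  imports Defs
begin

lemma rowsum_eq:
  fixes A :: "real ^ 'n ^ 'n"
  assumes Z: "Z_matrix A" and d: "A $ i $ i \<ge> 0"
  shows "(\<Sum>j\<in>UNIV - {i}. norm (A $ i $ j)) = A $ i $ i - (\<Sum>j\<in>UNIV. A $ i $ j)"
    and "norm (A $ i $ i) = A $ i $ i"
proof -
  have "(\<Sum>j\<in>UNIV - {i}. norm (A $ i $ j)) = (\<Sum>j\<in>UNIV - {i}. - A $ i $ j)"
    using Z unfolding Z_matrix_def by (intro sum.cong) auto
  also have "\<dots> = - (\<Sum>j\<in>UNIV - {i}. A $ i $ j)" by (simp add: sum_negf)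
  also have "(\<Sum>j\<in>UNIV. A $ i $ j) = A $ i $ i + (\<Sum>j\<in>UNIV - {i}. A $ i $ j)"
    by (simp add: sum.remove)
  ultimately show "(\<Sum>j\<in>UNIV - {i}. norm (A $ i $ j)) = A $ i $ i - (\<Sum>j\<in>UNIV. A $ i $ j)"
    by simp
  show "norm (A $ i $ i) = A $ i $ i" using d by simp
qed

lemma sdd_iff:
  fixes A :: "real ^ 'n ^ 'n"
  assumes Z: "Z_matrix A" and d: "\<forall>i. A $ i $ i \<ge> 0"
  shows "row_sdd A i \<longleftrightarrow> (\<Sum>j\<in>UNIV. A $ i $ j) > 0"
  using rowsum_eq[OF Z, of i] d unfolding row_sdd_def by auto

lemma wdd_iff:
  fixes A :: "real ^ 'n ^ 'n"
  assumes Z: "Z_matrix A" and d: "\<forall>i. A $ i $ i \<ge> 0"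
  shows "row_wdd A i \<longleftrightarrow> (\<Sum>j\<in>UNIV. A $ i $ j) \<ge> 0"
  using rowsum_eq[OF Z, of i] d unfolding row_wdd_def by auto

lemma mono_lemma:
  fixes A :: "real ^ 'n ^ 'n"
  assumes W: "wcdd A" and Z: "Z_matrix A" and d: "\<forall>i. A $ i $ i \<ge> 0"
    and Ax: "\<forall>i. (A *v x) $ i \<ge> 0"
  shows "x $ k \<ge> 0"
proof (rule ccontr)
  assume neg: "\<not> x $ k \<ge> 0"
  define m where "m = Min (range (\<lambda>i. x $ i))"
  have mle: "m \<le> x $ j" for j unfolding m_def by (rule Min_le) auto
  have "m \<in> range (\<lambda>i. x $ i)" unfolding m_def by (rule Min_in) auto
  then obtain i0 where i0: "x $ i0 = m" by auto
  have mneg: "m < 0" using mle[of k] neg by simp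
  define S where "S = {i. x $ i = m}"
  have key: "\<not> row_sdd A i \<and> (\<forall>j. A $ i $ j \<noteq> 0 \<longrightarrow> j \<in> S)" if iS: "i \<in> S" for i
  proof -
    have xi: "x $ i = m" using iS S_def by simp
    have trm: "A $ i $ j * x $ j - A $ i $ j * m \<le> 0" for j
    proof (cases "j = i")
      case True then show ?thesis using xi by simp
    next
      case False
      then have "A $ i $ j \<le> 0" using Z unfolding Z_matrix_def by auto
      then have "A $ i $ j * (x $ j - m) \<le> 0" using mle[of j]
        by (simp add: mult_nonpos_nonneg)
      then show ?thesis by (simp add: algebra_simps)
    qed
    define r where "r = (\<Sum>j\<in>UNIV. A $ i $ j)"
    have r0: "r \<ge> 0" using W wdd_iff[OF Z d, of i] unfolding wcdd_def wdd_def r_def by auto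
    have Axi: "(A *v x) $ i = (\<Sum>j\<in>UNIV. A $ i $ j * x $ j)"
      by (simp add: matrix_vector_mult_def)
    have diff: "(\<Sum>j\<in>UNIV. A $ i $ j * x $ j - A $ i $ j * m) = (A *v x) $ i - m * r"
      unfolding Axi r_def by (simp add: sum_subtractf sum_distrib_left algebra_simps)
    have "(\<Sum>j\<in>UNIV. A $ i $ j * x $ j - A $ i $ j * m) \<le> 0"
      using trm by (simp add: sum_nonpos)
    then have "(A *v x) $ i \<le> m * r" using diff by simp
    moreover have "m * r \<le> 0" using mneg r0 by (simp add: mult_nonpos_nonneg)
    moreover have "(A *v x) $ i \<ge> 0" using Ax by blast
    ultimately have A0: "(A *v x) $ i = 0" and mr: "m * r = 0" by linarith+
    have "r = 0" using mr mneg by simp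
    then have nsdd: "\<not> row_sdd A i" using sdd_iff[OF Z d, of i] unfolding r_def by simp
    have s0: "(\<Sum>j\<in>UNIV. - (A $ i $ j * x $ j - A $ i $ j * m)) = 0"
    proof -
      have "(\<Sum>j\<in>UNIV. - (A $ i $ j * x $ j - A $ i $ j * m)) = - (\<Sum>j\<in>UNIV. A $ i $ j * x $ j - A $ i $ j * m)"
        by (simp only: sum_negf)
      then show ?thesis using diff A0 mr by linarith
    qed
    have "\<forall>j\<in>UNIV. - (A $ i $ j * x $ j - A $ i $ j * m) = 0"
      using iffD1[OF sum_nonneg_eq_0_iff s0] trm by auto
    then have "A $ i $ j \<noteq> 0 \<Longrightarrow> j \<in> S" for j
      unfolding S_def by (auto simp: algebra_simps)
    with nsdd show ?thesis by blast
  qed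
  have "i0 \<in> S" using i0 S_def by simp
  then have "\<not> row_sdd A i0" using key by blast
  then obtain ws where ws: "adj_walk A ws" "hd ws = i0" "row_sdd A (last ws)"
    using W unfolding wcdd_def by blast
  have "t < length ws \<Longrightarrow> ws ! t \<in> S" for t
  proof (induction t)
    case 0 then show ?case using ws `i0 \<in> S` by (simp add: hd_conv_nth adj_walk_def)
  next
    case (Suc t)
    then have "A $ (ws ! t) $ (ws ! Suc t) \<noteq> 0" using ws(1) unfolding adj_walk_def by auto
    then show ?case using key Suc by auto
  qed
  then have "last ws \<in> S" using ws(1) unfolding adj_walk_def by (simp add: last_conv_nth)
  then show False using key ws(3) by blast
qed

lemma wcdd_invertible:
  fixes A :: "real ^ 'n ^ 'n"
  assumes W: "wcdd A" and Z: "Z_matrix A" and d: "\<forall>i. A $ i $ i \<ge> 0"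
  shows "invertible A"
proof -
  have "\<forall>x. A *v x = 0 \<longrightarrow> x = 0"
  proof (intro allI impI)
    fix x :: "real ^ 'n" assume x0: "A *v x = 0"
    have a: "\<forall>i. (A *v x) $ i \<ge> 0" using x0 by simp
    have "(A *v (-x)) $ i = - (A *v x) $ i" for i
      by (simp add: matrix_vector_mult_def sum_negf)
    then have b: "\<forall>i. (A *v (-x)) $ i \<ge> 0" using x0 by simp
    show "x = 0"
    proof -
      have "x $ i = 0" for i
        using mono_lemma[OF W Z d a, of i] mono_lemma[OF W Z d b, of i] by simp
      then show ?thesis by (simp add: vec_eq_iff)
    qed
  qed
  then show ?thesis using invertible_left_inverse matrix_left_invertible_ker by blast
qed

lemma inv_props:
  fixes A :: "real ^ 'n ^ 'n"
  assumes "invertible A"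
  shows "A ** matrix_inv A = mat 1"
  using someI_ex[of "\<lambda>A'. A ** A' = mat 1 \<and> A' ** A = mat 1"] assms
  unfolding invertible_def matrix_inv_def by blast

lemma wcdd_M:
  fixes A :: "real ^ 'n ^ 'n"
  assumes W: "wcdd A" and Z: "Z_matrix A" and d: "\<forall>i. A $ i $ i \<ge> 0"
  shows "nonsingular_M_matrix A"
proof -
  have inv: "invertible A" using wcdd_invertible[OF W Z d] .
  have "matrix_inv A $ i $ j \<ge> 0" for i j
  proof -
    define v :: "real ^ 'n" where "v = matrix_inv A *v axis j 1"
    have "A *v v = axis j 1"
      unfolding v_def matrix_vector_mul_assoc inv_props[OF inv] by simp
    then have "\<forall>k. (A *v v) $ k \<ge> 0" by (simp add: axis_def)
    then have "v $ i \<ge> 0" using mono_lemma[OF W Z d] by blast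
    moreover have "v $ i = matrix_inv A $ i $ j"
    proof -
      have "v $ i = (\<Sum>ja\<in>UNIV. if ja = j then matrix_inv A $ i $ ja else 0)"
        unfolding v_def matrix_vector_mult_def axis_def vec_lambda_beta by (rule sum.cong) auto
      then show ?thesis by simp
    qed
    ultimately show ?thesis by simp
  qed
  then show ?thesis using inv Z unfolding nonsingular_M_matrix_def monotone_matrix_def by blast
qed

lemma not_wcdd_singular:
  fixes A :: "real ^ 'n ^ 'n"
  assumes W: "wdd A" and nW: "\<not> wcdd A" and Z: "Z_matrix A" and d: "\<forall>i. A $ i $ i \<ge> 0"
  shows "\<not> invertible A"
proof
  assume inv: "invertible A"
  obtain i0 where i0: "\<not> row_sdd A i0"
    and nowalk: "\<And>ws. adj_walk A ws \<Longrightarrow> hd ws = i0 \<Longrightarrow> \<not> row_sdd A (last ws)"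
    using W nW unfolding wcdd_def by blast
  define R where "R = {j. \<exists>ws. adj_walk A ws \<and> hd ws = i0 \<and> last ws = j}"
  have i0R: "i0 \<in> R" unfolding R_def adj_walk_def by (rule CollectI, rule exI[of _ "[i0]"]) simp
  have closed: "k \<in> R" if jR: "j \<in> R" and jk: "A $ j $ k \<noteq> 0" for j k
  proof -
    obtain ws where ws: "adj_walk A ws" "hd ws = i0" "last ws = j" using jR R_def by auto
    have "adj_walk A (ws @ [k])"
      unfolding adj_walk_def
    proof (intro conjI allI impI)
      fix t assume t: "Suc t < length (ws @ [k])"
      show "A $ ((ws @ [k]) ! t) $ ((ws @ [k]) ! Suc t) \<noteq> 0"
      proof (cases "Suc t < length ws")
        case True then show ?thesis using ws(1) unfolding adj_walk_def by (simp add: nth_append)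
      next
        case False
        then have "t = length ws - 1" "ws \<noteq> []" using t ws(1) adj_walk_def by auto
        then show ?thesis using jk ws(3) False by (simp add: nth_append last_conv_nth)
      qed
    qed simp
    moreover have "hd (ws @ [k]) = i0" using ws(1,2) unfolding adj_walk_def by simp
    ultimately show ?thesis unfolding R_def by (intro CollectI exI[of _ "ws @ [k]"]) simp
  qed
  have rs0: "(\<Sum>j\<in>UNIV. A $ i $ j) = 0" if "i \<in> R" for i
  proof -
    have "\<not> row_sdd A i" using that nowalk unfolding R_def by blast
    moreover have "row_wdd A i" using W wdd_def by blast
    ultimately show ?thesis using sdd_iff[OF Z d, of i] wdd_iff[OF Z d, of i] by simp
  qed
  define b :: "real ^ 'n" where "b = (\<chi> i. if i \<in> R then -1 else 0)"
  have "surj ((*v) A)" using inv invertible_right_inverse matrix_right_invertible_surjective by blast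
  then obtain x where x: "A *v x = b" by (metis surjD)
  have finR: "finite R" "R \<noteq> {}" using i0R by auto
  have "Max ((\<lambda>j. x $ j) ` R) \<in> (\<lambda>j. x $ j) ` R" using finR by (intro Max_in) auto
  then obtain i where iR: "i \<in> R" and imax: "x $ i = Max ((\<lambda>j. x $ j) ` R)" by auto
  have le: "x $ j \<le> x $ i" if "j \<in> R" for j using imax that finR by simp
  have "(\<Sum>j\<in>UNIV. A $ i $ j * x $ i) \<le> (\<Sum>j\<in>UNIV. A $ i $ j * x $ j)"
  proof (rule sum_mono)
    fix j :: 'n
    show "A $ i $ j * x $ i \<le> A $ i $ j * x $ j"
    proof (cases "j = i")
      case False
      show ?thesis
      proof (cases "A $ i $ j = 0")
        case nz: False
        then have "j \<in> R" using closed iR by blast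
        moreover have "A $ i $ j \<le> 0" using Z False unfolding Z_matrix_def by auto
        ultimately show ?thesis using le by (simp add: mult_left_mono_neg)
      qed simp
    qed simp
  qed
  moreover have "(\<Sum>j\<in>UNIV. A $ i $ j * x $ i) = 0"
    using rs0[OF iR] by (simp add: sum_distrib_right[symmetric])
  moreover have "(\<Sum>j\<in>UNIV. A $ i $ j * x $ j) = b $ i"
    using x by (auto simp: matrix_vector_mult_def)
  ultimately show False using iR b_def by simp
qed

theorem theorem3p7:
  fixes A :: "real ^ 'n ^ 'n"
  assumes "wdd A" and "Z_matrix A" and "\<forall>i. A $ i $ i \<ge> 0"
  shows "(nonsingular_M_matrix A \<longleftrightarrow> invertible A) \<and> (invertible A \<longleftrightarrow> wcdd A)"
  using wcdd_M[OF _ assms(2,3)] not_wcdd_singular[OF assms(1) _ assms(2,3)]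
  unfolding nonsingular_M_matrix_def monotone_matrix_def by blast

end
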